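(* Let $(A,+,\circ)$ be a skew brace. Then $\zeta(A)$ is a central ideal of $A$, i.e. $\llbracket A,\zeta(A)\rrbracket=0$, and it contains every central ideal of $A$; thus $\zeta(A)$ is the largest central ideal of $A$.
   Context: A skew brace is a triple $(A,+,\circ)$ where $(A,+)$ and $(A,\circ)$ are groups (not necessarily abelian; $+$ is written additively) such that $x\circ(y+z)=(x\circ y)-x+(x\circ z)$ for all $x,y,z\in A$; the common neutral element is $0$, $-x$ is the $+$-inverse and $\bar x$ the $\circ$-inverse. Let $\lambda_x(y)=-x+(x\circ y)$, $x*y=-x+(x\circ y)-y$, $[x,y]_+=x+y-x-y$. An ideal is a subgroup $I$ of $(A,+)$ with $\lambda_a(I)\subseteq I$ for all $a\in A$ that is normal in both $(A,+)$ and $(A,\circ)$. A binary polynomial of $A$ is a map $A^2\to A$ of the form $(x,y)\mapsto t(c_1,\dots,c_k,x,y)$ with $t$ a term in $+,-,\circ,\bar{\ },0$ and constants $c_i\in A$; it is absorbing if $f(a,0)=f(0,a)=0$ for all $a$. For ideals $I,J$, $\llbracket I,J\rrbracket$ is the ideal generated by $\{f(i,j): i\in I,j\in J, f\text{ absorbing binary polynomial}\}$; an ideal $I$ is central if $\llbracket A,I\rrbracket=0$. The center is $\zeta(A)=\{x\in A: x*y=y*x=[x,y]_+=0\ \forall y\in A\}$. *)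

theory Defs
  imports Main
begin

text \<open>A skew brace whose underlying set is the whole type 'a.\<close>
record 'a sbrace =
  sadd :: "'a \<Rightarrow> 'a \<Rightarrow> 'a"
  sneg :: "'a \<Rightarrow> 'a"
  szero :: "'a"
  scirc :: "'a \<Rightarrow> 'a \<Rightarrow> 'a"
  sinv :: "'a \<Rightarrow> 'a"

definition is_group :: "('a \<Rightarrow> 'a \<Rightarrow> 'a) \<Rightarrow> ('a \<Rightarrow> 'a) \<Rightarrow> 'a \<Rightarrow> bool" where
  "is_group m i e \<longleftrightarrow>
     (\<forall>x y z. m (m x y) z = m x (m y z)) \<and>
     (\<forall>x. m e x = x \<and> m x e = x) \<and>
     (\<forall>x. m (i x) x = e \<and> m x (i x) = e)"

definition skew_brace :: "'a sbrace \<Rightarrow> bool" where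
  "skew_brace B \<longleftrightarrow>
     is_group (sadd B) (sneg B) (szero B) \<and>
     is_group (scirc B) (sinv B) (szero B) \<and>
     (\<forall>x y z. scirc B x (sadd B y z) =
         sadd B (sadd B (scirc B x y) (sneg B x)) (scirc B x z))"

definition ssub :: "'a sbrace \<Rightarrow> 'a \<Rightarrow> 'a \<Rightarrow> 'a" where
  "ssub B a b = sadd B a (sneg B b)"

definition slambda :: "'a sbrace \<Rightarrow> 'a \<Rightarrow> 'a \<Rightarrow> 'a" where
  "slambda B x y = sadd B (sneg B x) (scirc B x y)"

definition sstar :: "'a sbrace \<Rightarrow> 'a \<Rightarrow> 'a \<Rightarrow> 'a" where
  "sstar B x y = sadd B (sadd B (sneg B x) (scirc B x y)) (sneg B y)"

definition scomm :: "'a sbrace \<Rightarrow> 'a \<Rightarrow> 'a \<Rightarrow> 'a" where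
  "scomm B x y = sadd B (sadd B (sadd B x y) (sneg B x)) (sneg B y)"

definition normal_sub :: "('a \<Rightarrow> 'a \<Rightarrow> 'a) \<Rightarrow> ('a \<Rightarrow> 'a) \<Rightarrow> 'a \<Rightarrow> 'a set \<Rightarrow> bool" where
  "normal_sub m i e I \<longleftrightarrow>
     e \<in> I \<and> (\<forall>x\<in>I. \<forall>y\<in>I. m x y \<in> I) \<and> (\<forall>x\<in>I. i x \<in> I) \<and>
     (\<forall>a. \<forall>x\<in>I. m (m a x) (i a) \<in> I)"

definition is_ideal :: "'a sbrace \<Rightarrow> 'a set \<Rightarrow> bool" where
  "is_ideal B I \<longleftrightarrow>
     normal_sub (sadd B) (sneg B) (szero B) I \<and>
     normal_sub (scirc B) (sinv B) (szero B) I \<and>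
     (\<forall>a. \<forall>x\<in>I. slambda B a x \<in> I)"

datatype 'a bterm = VX | VY | Cst 'a | Zer | Pl "'a bterm" "'a bterm" | Ng "'a bterm"
  | Ci "'a bterm" "'a bterm" | Iv "'a bterm"

fun beval :: "'a sbrace \<Rightarrow> 'a bterm \<Rightarrow> 'a \<Rightarrow> 'a \<Rightarrow> 'a" where
  "beval B VX x y = x"
| "beval B VY x y = y"
| "beval B (Cst c) x y = c"
| "beval B Zer x y = szero B"
| "beval B (Pl s t) x y = sadd B (beval B s x y) (beval B t x y)"
| "beval B (Ng s) x y = sneg B (beval B s x y)"
| "beval B (Ci s t) x y = scirc B (beval B s x y) (beval B t x y)"
| "beval B (Iv s) x y = sinv B (beval B s x y)"

definition binary_polys :: "'a sbrace \<Rightarrow> ('a \<Rightarrow> 'a \<Rightarrow> 'a) set" where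
  "binary_polys B = {f. \<exists>t. f = beval B t}"

definition absorbing :: "'a sbrace \<Rightarrow> ('a \<Rightarrow> 'a \<Rightarrow> 'a) \<Rightarrow> bool" where
  "absorbing B f \<longleftrightarrow> (\<forall>a. f a (szero B) = szero B \<and> f (szero B) a = szero B)"

definition ideal_gen :: "'a sbrace \<Rightarrow> 'a set \<Rightarrow> 'a set" where
  "ideal_gen B S = \<Inter>{I. is_ideal B I \<and> S \<subseteq> I}"

definition term_comm :: "'a sbrace \<Rightarrow> 'a set \<Rightarrow> 'a set \<Rightarrow> 'a set" where
  "term_comm B I J = ideal_gen B
     {f i j | f i j. f \<in> binary_polys B \<and> absorbing B f \<and> i \<in> I \<and> j \<in> J}"

definition central_ideal :: "'a sbrace \<Rightarrow> 'a set \<Rightarrow> bool" where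
  "central_ideal B I \<longleftrightarrow> is_ideal B I \<and> term_comm B UNIV I = {szero B}"

definition center :: "'a sbrace \<Rightarrow> 'a set" where
  "center B = {x. \<forall>y. sstar B x y = szero B \<and> sstar B y x = szero B \<and> scomm B x y = szero B}"

end

theory Submission
  imports Defs
begin

locale sb =
  fixes B :: "'a sbrace"
  assumes sb: "skew_brace B"
begin

abbreviation pl (infixl "\<oplus>" 65) where "x \<oplus> y \<equiv> sadd B x y"
abbreviation ci (infixl "\<odot>" 70) where "x \<odot> y \<equiv> scirc B x y"
abbreviation ng where "ng x \<equiv> sneg B x"
abbreviation iv where "iv x \<equiv> sinv B x"
abbreviation o0 where "o0 \<equiv> szero B"

lemma a_assoc: "(x \<oplus> y) \<oplus> z = x \<oplus> (y \<oplus> z)"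
  and a_lz: "o0 \<oplus> x = x" and a_rz: "x \<oplus> o0 = x"
  and a_linv: "ng x \<oplus> x = o0" and a_rinv: "x \<oplus> ng x = o0"
  and c_assoc: "(x \<odot> y) \<odot> z = x \<odot> (y \<odot> z)"
  and c_lz: "o0 \<odot> x = x" and c_rz: "x \<odot> o0 = x"
  and c_linv: "iv x \<odot> x = o0" and c_rinv: "x \<odot> iv x = o0"
  and dist: "x \<odot> (y \<oplus> z) = (x \<odot> y) \<oplus> ng x \<oplus> (x \<odot> z)"
  using sb unfolding skew_brace_def is_group_def by auto

lemma a_c1: "ng x \<oplus> (x \<oplus> y) = y"
  by (metis a_assoc a_linv a_lz)
lemma a_c2: "x \<oplus> (ng x \<oplus> y) = y"
  by (metis a_assoc a_rinv a_lz)
lemma c_c1: "iv x \<odot> (x \<odot> y) = y"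
  by (metis c_assoc c_linv c_lz)
lemma c_c2: "x \<odot> (iv x \<odot> y) = y"
  by (metis c_assoc c_rinv c_lz)

lemmas S = a_assoc a_lz a_rz a_linv a_rinv c_assoc c_lz c_rz c_linv c_rinv a_c1 a_c2 c_c1 c_c2

lemma a_lcancel: "x \<oplus> y = x \<oplus> z \<longleftrightarrow> y = z"
  by (metis a_c1)
lemma a_rcancel: "y \<oplus> x = z \<oplus> x \<longleftrightarrow> y = z"
  by (metis a_assoc a_rinv a_rz)
lemma c_lcancel: "x \<odot> y = x \<odot> z \<longleftrightarrow> y = z"
  by (metis c_c1)
lemma c_rcancel: "y \<odot> x = z \<odot> x \<longleftrightarrow> y = z"
  by (metis c_assoc c_rinv c_rz)

lemma a_sub0: "a \<oplus> ng b = o0 \<longleftrightarrow> a = b"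
proof
  assume h: "a \<oplus> ng b = o0"
  have "a = (a \<oplus> ng b) \<oplus> b" by (simp only: a_assoc a_linv a_rz)
  then show "a = b" using h by (simp only: a_lz)
qed (simp only: a_rinv)
lemma a_eq: "ng a \<oplus> b = c \<longleftrightarrow> b = a \<oplus> c"
  by (metis a_c1 a_c2)

lemma a_eq2: "a \<oplus> ng b = c \<longleftrightarrow> a = c \<oplus> b"
  by (metis a_assoc a_linv a_rinv a_rz)

lemma neg0: "ng o0 = o0" by (metis a_lz a_rinv)
lemma inv0: "iv o0 = o0" by (metis c_lz c_rinv)
lemma c0: "x \<odot> o0 = x" by (rule c_rz)

lemma center_iff: "z \<in> center B \<longleftrightarrow> (\<forall>y. z \<odot> y = z \<oplus> y \<and> y \<odot> z = y \<oplus> z \<and> z \<oplus> y = y \<oplus> z)"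
  unfolding center_def sstar_def scomm_def
  by (simp add: a_sub0 a_eq a_eq2 a_lz)

lemma neg_add: "ng (x \<oplus> y) = ng y \<oplus> ng x"
  by (metis a_assoc a_c1 a_rinv a_rz)
lemma neg_neg: "ng (ng x) = x"
  by (metis a_c1 a_rinv a_rz)
lemma inv_c: "iv (x \<odot> y) = iv y \<odot> iv x"
  by (metis c_assoc c_c1 c_rinv c_rz)

lemma cen_add: assumes "x \<in> center B" "y \<in> center B" shows "x \<oplus> y \<in> center B"
proof -
  have X1: "\<And>u. x \<odot> u = x \<oplus> u" and X2: "\<And>u. u \<odot> x = u \<oplus> x" and X3: "\<And>u. x \<oplus> u = u \<oplus> x"
   and Y1: "\<And>u. y \<odot> u = y \<oplus> u" and Y2: "\<And>u. u \<odot> y = u \<oplus> y" and Y3: "\<And>u. y \<oplus> u = u \<oplus> y"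
    using assms unfolding center_iff by blast+
  show ?thesis unfolding center_iff
  proof
    fix u
    have "(x \<oplus> y) \<odot> u = (x \<odot> y) \<odot> u" by (simp only: X1)
    also have "\<dots> = x \<odot> (y \<odot> u)" by (rule c_assoc)
    also have "\<dots> = x \<oplus> (y \<oplus> u)" by (simp only: X1 Y1)
    finally have 1: "(x \<oplus> y) \<odot> u = (x \<oplus> y) \<oplus> u" by (simp only: a_assoc)
    have "u \<odot> (x \<oplus> y) = (u \<odot> x) \<oplus> ng u \<oplus> (u \<odot> y)" by (rule dist)
    also have "\<dots> = (x \<oplus> u) \<oplus> ng u \<oplus> (u \<oplus> y)" by (simp only: X2 Y2 X3)
    also have "\<dots> = x \<oplus> (u \<oplus> y)" by (simp only: a_assoc a_c2 a_rinv a_rz)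
    also have "\<dots> = u \<oplus> (x \<oplus> y)" by (simp only: X3 a_assoc)
    finally have 2: "u \<odot> (x \<oplus> y) = u \<oplus> (x \<oplus> y)" .
    have "(x \<oplus> y) \<oplus> u = x \<oplus> (u \<oplus> y)" by (simp only: a_assoc Y3)
    also have "\<dots> = u \<oplus> (x \<oplus> y)" by (simp only: X3 a_assoc)
    finally have 3: "(x \<oplus> y) \<oplus> u = u \<oplus> (x \<oplus> y)" .
    show "(x \<oplus> y) \<odot> u = (x \<oplus> y) \<oplus> u \<and> u \<odot> (x \<oplus> y) = u \<oplus> (x \<oplus> y) \<and> (x \<oplus> y) \<oplus> u = u \<oplus> (x \<oplus> y)"
      using 1 2 3 by (intro conjI)
  qed
qed

lemma cen_inv_neg: assumes "x \<in> center B" shows "iv x = ng x"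
proof -
  have "x \<odot> iv x = x \<oplus> iv x" using assms center_iff by auto
  then have "x \<oplus> iv x = o0" by (simp add: c_rinv)
  then show ?thesis by (metis a_c1 a_rz)
qed

lemma cen_neg: assumes "x \<in> center B" shows "ng x \<in> center B"
proof -
  have X: "\<And>u. x \<odot> u = x \<oplus> u \<and> u \<odot> x = u \<oplus> x \<and> x \<oplus> u = u \<oplus> x"
    using assms center_iff by auto
  have I: "iv x = ng x" using cen_inv_neg assms .
  show ?thesis unfolding center_iff
  proof
    fix u
    have 1: "ng x \<odot> u = ng x \<oplus> u"
    proof -
      have "u = x \<odot> (iv x \<odot> u)" by (simp add: S)
      also have "\<dots> = x \<oplus> (iv x \<odot> u)" using X by simp
      finally show ?thesis using I by (metis a_c1)
    qed
    have 2: "u \<odot> ng x = u \<oplus> ng x"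
    proof -
      have "u = u \<odot> (x \<oplus> ng x)" by (simp add: S)
      also have "\<dots> = (u \<odot> x) \<oplus> ng u \<oplus> (u \<odot> ng x)" by (rule dist)
      also have "\<dots> = (u \<oplus> x) \<oplus> ng u \<oplus> (u \<odot> ng x)" using X by simp
      also have "(u \<oplus> x) \<oplus> ng u = x" by (metis X a_assoc a_rinv a_rz)
      finally have "u = x \<oplus> (u \<odot> ng x)" .
      then have "u \<odot> ng x = ng x \<oplus> u" by (metis a_c1)
      moreover have "ng x \<oplus> u = u \<oplus> ng x"
        by (metis X a_assoc a_c1 a_rinv a_rz)
      ultimately show ?thesis by simp
    qed
    have 3: "ng x \<oplus> u = u \<oplus> ng x" by (metis X a_assoc a_c1 a_rinv a_rz)
    show "ng x \<odot> u = ng x \<oplus> u \<and> u \<odot> ng x = u \<oplus> ng x \<and> ng x \<oplus> u = u \<oplus> ng x"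
      using 1 2 3 by simp
  qed
qed

lemma cen0: "o0 \<in> center B"
  unfolding center_iff by (simp add: S)

lemma center_ideal: "is_ideal B (center B)"
proof -
  have ac: "\<And>a x. x \<in> center B \<Longrightarrow> a \<oplus> x \<oplus> ng a = x"
    using center_iff by (metis a_assoc a_c2)
  have cc: "\<And>a x. x \<in> center B \<Longrightarrow> a \<odot> x \<odot> iv a = x"
    using center_iff by (metis c_assoc c_c2)
  have cp: "\<And>x y. x \<in> center B \<Longrightarrow> x \<odot> y = x \<oplus> y"
    using center_iff by auto
  have lam: "\<And>a x. x \<in> center B \<Longrightarrow> slambda B a x = x"
    unfolding slambda_def using center_iff by (metis a_c1)
  show ?thesis unfolding is_ideal_def normal_sub_def
    using cen0 cen_add cen_neg ac cc cp cen_inv_neg lam by auto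
qed

lemma ideal0: "is_ideal B I \<Longrightarrow> o0 \<in> I"
  unfolding is_ideal_def normal_sub_def by auto

lemma ideal_zero: "is_ideal B {o0}"
  unfolding is_ideal_def normal_sub_def slambda_def
  by (simp add: S neg0 inv0)

lemma shift: assumes z: "z \<in> center B"
  shows "\<exists>w \<in> center B. \<forall>x y. beval B t x (y \<oplus> z) = beval B t x y \<oplus> w"
proof (induction t)
  case VX then show ?case using cen0 by (intro bexI[of _ o0]) (auto simp: S)
next
  case VY then show ?case using z by auto
next
  case (Cst c) then show ?case using cen0 by (intro bexI[of _ o0]) (auto simp: S)
next
  case Zer then show ?case using cen0 by (intro bexI[of _ o0]) (auto simp: S)
next
  case (Pl s t)
  then obtain w1 w2 where w1: "w1 \<in> center B" "\<forall>x y. beval B s x (y \<oplus> z) = beval B s x y \<oplus> w1"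
    and w2: "w2 \<in> center B" "\<forall>x y. beval B t x (y \<oplus> z) = beval B t x y \<oplus> w2" by blast
  have c1: "\<And>u. w1 \<oplus> u = u \<oplus> w1" using w1(1) center_iff by auto
  show ?case
  proof (intro bexI allI)
    fix x y
    show "beval B (Pl s t) x (y \<oplus> z) = beval B (Pl s t) x y \<oplus> (w1 \<oplus> w2)"
      using w1 w2 c1 by (simp add: a_assoc)
  qed (use w1 w2 cen_add in auto)
next
  case (Ng s)
  then obtain w1 where w1: "w1 \<in> center B" "\<forall>x y. beval B s x (y \<oplus> z) = beval B s x y \<oplus> w1" by blast
  have c1: "\<And>u. ng w1 \<oplus> u = u \<oplus> ng w1" using cen_neg[OF w1(1)] center_iff by auto
  show ?case
  proof (intro bexI allI)
    fix x y
    show "beval B (Ng s) x (y \<oplus> z) = beval B (Ng s) x y \<oplus> ng w1"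
      using w1 c1 by (simp add: neg_add)
  qed (use w1 cen_neg in auto)
next
  case (Ci s t)
  then obtain w1 w2 where w1: "w1 \<in> center B" "\<forall>x y. beval B s x (y \<oplus> z) = beval B s x y \<oplus> w1"
    and w2: "w2 \<in> center B" "\<forall>x y. beval B t x (y \<oplus> z) = beval B t x y \<oplus> w2" by blast
  have d1: "\<And>u. u \<oplus> w1 = u \<odot> w1" "\<And>u. w1 \<odot> u = u \<odot> w1" using w1(1) center_iff by auto
  have d2: "\<And>u. u \<oplus> w2 = u \<odot> w2" using w2(1) center_iff by auto
  have d12: "w1 \<oplus> w2 = w1 \<odot> w2" using w2(1) center_iff by auto
  show ?case
  proof (intro bexI allI)
    fix x y
    show "beval B (Ci s t) x (y \<oplus> z) = beval B (Ci s t) x y \<oplus> (w1 \<oplus> w2)"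
    proof -
      let ?s = "beval B s x y" and ?t = "beval B t x y"
      have "beval B (Ci s t) x (y \<oplus> z) = (?s \<oplus> w1) \<odot> (?t \<oplus> w2)" using w1 w2 by simp
      also have "\<dots> = (?s \<odot> w1) \<odot> (?t \<odot> w2)" by (simp add: d1 d2)
      also have "\<dots> = ?s \<odot> (w1 \<odot> (?t \<odot> w2))" by (simp add: c_assoc)
      also have "w1 \<odot> (?t \<odot> w2) = ?t \<odot> (w2 \<odot> w1)" by (simp add: d1(2) c_assoc)
      also have "w2 \<odot> w1 = w1 \<odot> w2" by (simp add: d1(2))
      also have "?s \<odot> (?t \<odot> (w1 \<odot> w2)) = (?s \<odot> ?t) \<odot> (w1 \<odot> w2)" by (simp add: c_assoc)
      also have "\<dots> = (?s \<odot> ?t) \<oplus> (w1 \<oplus> w2)" by (metis d12 cen_add w1(1) w2(1) center_iff)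
      finally show ?thesis by simp
    qed
  qed (use w1 w2 cen_add in auto)
next
  case (Iv s)
  then obtain w1 where w1: "w1 \<in> center B" "\<forall>x y. beval B s x (y \<oplus> z) = beval B s x y \<oplus> w1" by blast
  have d1: "\<And>u. u \<oplus> iv w1 = u \<odot> iv w1" "\<And>u. u \<oplus> w1 = u \<odot> w1" "\<And>u. w1 \<odot> u = u \<odot> w1" "\<And>u. iv w1 \<odot> u = u \<odot> iv w1"
  proof -
    have C1: "\<And>u. w1 \<odot> u = w1 \<oplus> u \<and> u \<odot> w1 = u \<oplus> w1 \<and> w1 \<oplus> u = u \<oplus> w1"
      using w1(1) center_iff by blast
    have C2: "\<And>u. iv w1 \<odot> u = iv w1 \<oplus> u \<and> u \<odot> iv w1 = u \<oplus> iv w1 \<and> iv w1 \<oplus> u = u \<oplus> iv w1"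
      using cen_neg[OF w1(1)] cen_inv_neg[OF w1(1)] center_iff by metis
    show "\<And>u. u \<oplus> iv w1 = u \<odot> iv w1" "\<And>u. u \<oplus> w1 = u \<odot> w1" "\<And>u. w1 \<odot> u = u \<odot> w1" "\<And>u. iv w1 \<odot> u = u \<odot> iv w1"
      using C1 C2 by metis+
  qed
  show ?case
  proof (intro bexI allI)
    fix x y
    show "beval B (Iv s) x (y \<oplus> z) = beval B (Iv s) x y \<oplus> iv w1"
      using w1 by (simp add: d1 inv_c)
  qed (use w1 cen_neg cen_inv_neg in auto)
qed

lemma absorb_center: assumes z: "z \<in> center B" and f: "f \<in> binary_polys B" "absorbing B f"
  shows "f a z = o0"
proof -
  obtain t where t: "f = beval B t" using f unfolding binary_polys_def by auto
  obtain w where w: "\<forall>x y. beval B t x (y \<oplus> z) = beval B t x y \<oplus> w" using shift[OF z] by blast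
  have f0: "\<And>a. f a o0 = o0" "\<And>a. f o0 a = o0" using f(2) unfolding absorbing_def by auto
  have "f o0 z = f o0 o0 \<oplus> w" using w[rule_format, of o0 o0] t by (simp add: a_lz)
  then have "w = o0" using f0 by (simp add: a_lz)
  moreover have "f a z = f a o0 \<oplus> w" using w[rule_format, of a o0] t by (simp add: a_lz)
  ultimately show ?thesis using f0 by (simp add: a_rz)
qed

lemma gen_sub: "is_ideal B I \<Longrightarrow> S \<subseteq> I \<Longrightarrow> ideal_gen B S \<subseteq> I"
  unfolding ideal_gen_def by auto
lemma gen_sup: "S \<subseteq> ideal_gen B S"
  unfolding ideal_gen_def by auto
lemma gen0: "o0 \<in> ideal_gen B S"
  unfolding ideal_gen_def using ideal0 by auto

lemma part1: "central_ideal B (center B)"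
proof -
  have "term_comm B UNIV (center B) \<subseteq> {o0}"
    unfolding term_comm_def
    by (rule gen_sub[OF ideal_zero]) (auto intro: absorb_center)
  then show ?thesis unfolding central_ideal_def term_comm_def
    using center_ideal gen0 by auto
qed

lemma part2: assumes "central_ideal B I" shows "I \<subseteq> center B"
proof
  fix x assume x: "x \<in> I"
  have TC: "term_comm B UNIV I = {o0}" using assms unfolding central_ideal_def by auto
  have key: "\<And>t y. absorbing B (beval B t) \<Longrightarrow> beval B t y x = o0"
  proof -
    fix t y assume "absorbing B (beval B t)"
    then have "beval B t y x \<in> term_comm B UNIV I"
      unfolding term_comm_def binary_polys_def using x
      by (intro subsetD[OF gen_sup]) blast
    then show "beval B t y x = o0" using TC by auto
  qed
  have 1: "\<And>y. sstar B x y = o0"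
  proof -
    fix y
    have "absorbing B (beval B (Pl (Pl (Ng VY) (Ci VY VX)) (Ng VX)))"
      unfolding absorbing_def by (simp add: S neg0)
    from key[OF this, of y] show "sstar B x y = o0" by (simp add: sstar_def)
  qed
  have 2: "\<And>y. sstar B y x = o0"
  proof -
    fix y
    have "absorbing B (beval B (Pl (Pl (Ng VX) (Ci VX VY)) (Ng VY)))"
      unfolding absorbing_def by (simp add: S neg0)
    from key[OF this, of y] show "sstar B y x = o0" by (simp add: sstar_def)
  qed
  have 3: "\<And>y. scomm B x y = o0"
  proof -
    fix y
    have "absorbing B (beval B (Pl (Pl (Pl VY VX) (Ng VY)) (Ng VX)))"
      unfolding absorbing_def by (simp add: S neg0)
    from key[OF this, of y] show "scomm B x y = o0" by (simp add: scomm_def)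
  qed
  show "x \<in> center B" unfolding center_def using 1 2 3 by auto
qed

end

theorem mainTheorem16:
  fixes B :: "'a sbrace"
  assumes "skew_brace B"
  shows "central_ideal B (center B) \<and>
         (\<forall>I. central_ideal B I \<longrightarrow> I \<subseteq> center B)"
proof -
  interpret sb B using assms by unfold_locales
  show ?thesis using part1 part2 by auto
qed

end
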